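(* Let $p,t\in(0,\infty)$, $q\in(1,\infty)$, $r\in(0,1)$ and $\eta\in(0,1)$. Suppose $\alpha\ge0$ is such that there exists $C>0$ with $$\Big\|\Big(\sum_{Q\in\mathcal{S}}\mathsf{P}^r_Q(|f|)^t\mathbf{1}_Q\Big)^{1/t}\Big\|_{L^p(w)}\le C[w]_{A_q}^\alpha\|f\|_{L^p(w)}$$ for all weights $w\in A_q$, all $\eta$-sparse collections of cubes $\mathcal{S}$ and all $f\in L^p(w)$. Then $\alpha\ge\max\{\frac1p,\frac1t\}$.
   Context: A family $\mathcal{S}$ of cubes in $\mathbb{R}^d$ is $\eta$-sparse if there are pairwise disjoint $E_Q\subseteq Q$, $Q\in\mathcal{S}$, with $|E_Q|\ge\eta|Q|$. $\mathsf{P}^r_Q(g):=\inf\{\lambda\in\mathbb{R}:|\{x\in Q:g(x)>\lambda\}|\le r|Q|\}$. A weight $w$ is a locally integrable positive function, $\|f\|_{L^p(w)}=(\int|f|^pw)^{1/p}$; $[w]_{A_q}:=\sup_Q\langle w\rangle_Q\langle w^{-1/(q-1)}\rangle_Q^{q-1}$ over cubes $Q$, and $w\in A_q$ means this is finite. *)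

theory Defs
  imports "HOL-Analysis.Analysis"
begin

text \<open>Real powers of extended nonnegative reals (infinity stays infinity);
  only used with positive exponents a.\<close>
definition epowr :: "ennreal \<Rightarrow> real \<Rightarrow> ennreal" where
  "epowr x a = (if x = top then top else ennreal (enn2real x powr a))"

definition cubes :: "'a::euclidean_space set set" where
  "cubes = {cbox x (x + l *\<^sub>R One) | x l. l > 0}"

definition sparse :: "real \<Rightarrow> 'a::euclidean_space set set \<Rightarrow> bool" where
  "sparse \<eta> S \<longleftrightarrow> S \<subseteq> cubes \<and>
     (\<exists>E. disjoint_family_on E S \<and>
        (\<forall>Q\<in>S. E Q \<subseteq> Q \<and> E Q \<in> sets lebesgue \<and>
                 measure lebesgue (E Q) \<ge> \<eta> * measure lebesgue Q))"

definition Pr :: "real \<Rightarrow> 'a::euclidean_space set \<Rightarrow> ('a \<Rightarrow> real) \<Rightarrow> real" where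
  "Pr r Q g = Inf {l. measure lebesgue {x\<in>Q. g x > l} \<le> r * measure lebesgue Q}"

definition weight :: "('a::euclidean_space \<Rightarrow> real) \<Rightarrow> bool" where
  "weight w \<longleftrightarrow> w \<in> borel_measurable lebesgue \<and> (\<forall>x. w x > 0) \<and>
     (\<forall>K. compact K \<longrightarrow> set_integrable lebesgue K w)"

definition avg :: "'a::euclidean_space set \<Rightarrow> ('a \<Rightarrow> real) \<Rightarrow> real" where
  "avg Q g = (\<integral>x\<in>Q. g x \<partial>lebesgue) / measure lebesgue Q"

definition Aq_quantity :: "real \<Rightarrow> ('a::euclidean_space \<Rightarrow> real) \<Rightarrow> 'a set \<Rightarrow> real" where
  "Aq_quantity q w Q = avg Q w * (avg Q (\<lambda>x. w x powr (-1 / (q - 1)))) powr (q - 1)"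

definition in_Aq :: "real \<Rightarrow> ('a::euclidean_space \<Rightarrow> real) \<Rightarrow> bool" where
  "in_Aq q w \<longleftrightarrow> weight w \<and>
     (\<forall>Q\<in>cubes. set_integrable lebesgue Q w \<and>
                 set_integrable lebesgue Q (\<lambda>x. w x powr (-1 / (q - 1)))) \<and>
     bdd_above (Aq_quantity q w ` cubes)"

definition Aq_char :: "real \<Rightarrow> ('a::euclidean_space \<Rightarrow> real) \<Rightarrow> real" where
  "Aq_char q w = (SUP Q\<in>cubes. Aq_quantity q w Q)"

definition Lpw_norm :: "real \<Rightarrow> ('a::euclidean_space \<Rightarrow> real) \<Rightarrow> ('a \<Rightarrow> ennreal) \<Rightarrow> ennreal" where
  "Lpw_norm p w F = epowr (\<integral>\<^sup>+ x. epowr (F x) p * ennreal (w x) \<partial>lebesgue) (1 / p)"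

definition in_Lpw :: "real \<Rightarrow> ('a::euclidean_space \<Rightarrow> real) \<Rightarrow> ('a \<Rightarrow> real) \<Rightarrow> bool" where
  "in_Lpw p w f \<longleftrightarrow> f \<in> borel_measurable lebesgue \<and>
     (\<integral>\<^sup>+ x. ennreal (\<bar>f x\<bar> powr p * w x) \<partial>lebesgue) < top"

definition sparse_op :: "real \<Rightarrow> real \<Rightarrow> 'a::euclidean_space set set \<Rightarrow> ('a \<Rightarrow> real) \<Rightarrow> 'a \<Rightarrow> ennreal" where
  "sparse_op r t S f x = epowr (\<integral>\<^sup>+ Q. ennreal (Pr r Q (\<lambda>y. \<bar>f y\<bar>) powr t * indicator Q x) \<partial>count_space S) (1 / t)"

end

theory Submission
  imports Defs
begin


definition CC :: "real \<Rightarrow> 'a::euclidean_space set" where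
  "CC \<rho> = cbox (-(\<rho> *\<^sub>R One)) (\<rho> *\<^sub>R One)"

lemma mem_CC: "x \<in> CC \<rho> \<longleftrightarrow> infnorm x \<le> \<rho>"
proof -
  have "x \<in> CC \<rho> \<longleftrightarrow> (\<forall>i\<in>Basis. \<bar>x \<bullet> i\<bar> \<le> \<rho>)"
    by (auto simp: CC_def mem_box abs_le_iff)
  also have "\<dots> \<longleftrightarrow> infnorm x \<le> \<rho>"
    by (simp add: infnorm_Max)
  finally show ?thesis .
qed

lemma CC_mono: "\<rho> \<le> \<rho>' \<Longrightarrow> CC \<rho> \<subseteq> CC \<rho>'"
  by (auto simp: mem_CC)

lemma CC_sets[measurable]: "CC \<rho> \<in> sets lborel"
  by (simp add: CC_def)

lemma CC_sets_leb: "CC \<rho> \<in> sets lebesgue"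
  by (rule sets_completionI_sets) (simp add: CC_def)

lemma emeasure_CC: "0 \<le> \<rho> \<Longrightarrow> emeasure lborel (CC \<rho> :: 'a::euclidean_space set) = ennreal ((2*\<rho>)^DIM('a))"
  by (simp add: CC_def emeasure_lborel_cbox_eq inner_diff_left prod_constant algebra_simps)

lemma measure_CC: "0 \<le> \<rho> \<Longrightarrow> measure lborel (CC \<rho> :: 'a::euclidean_space set) = (2*\<rho>)^DIM('a)"
  by (simp add: measure_def emeasure_CC)

lemma CC_cubes: "0 < \<rho> \<Longrightarrow> CC \<rho> \<in> cubes"
proof -
  have e: "- (\<rho> *\<^sub>R One) + (2*\<rho>) *\<^sub>R (One::'a) = \<rho> *\<^sub>R One"
    by (simp add: scaleR_left_diff_distrib[symmetric])
  assume "0 < \<rho>"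
  then have "cbox (-(\<rho> *\<^sub>R One)) (\<rho> *\<^sub>R One) = cbox (-(\<rho> *\<^sub>R One)) (-(\<rho> *\<^sub>R One) + (2*\<rho>) *\<^sub>R (One::'a)) \<and> 0 < 2*\<rho>"
    by (simp only: e) simp
  then show ?thesis unfolding cubes_def CC_def by blast
qed

lemma CC_inj: "0 \<le> \<rho> \<Longrightarrow> 0 \<le> \<rho>' \<Longrightarrow> CC \<rho> = (CC \<rho>' :: 'a::euclidean_space set) \<Longrightarrow> \<rho> = \<rho>'"
proof -
  assume a: "0 \<le> \<rho>" "0 \<le> \<rho>'" "CC \<rho> = (CC \<rho>' :: 'a set)"
  have i: "infnorm (c *\<^sub>R (One::'a)) = c" if "0 \<le> c" for c
    using that by (simp add: infnorm_mul infnorm_Max)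
  have "\<rho> *\<^sub>R (One::'a) \<in> CC \<rho>'" using a by (metis i mem_CC order_refl)
  then have 1: "\<rho> \<le> \<rho>'" using i[OF a(1)] by (simp add: mem_CC)
  have "\<rho>' *\<^sub>R (One::'a) \<in> CC \<rho>" using a by (metis i mem_CC order_refl)
  then have 2: "\<rho>' \<le> \<rho>" using i[OF a(2)] by (simp add: mem_CC)
  from 1 2 show ?thesis by simp
qed

definition ww :: "nat \<Rightarrow> 'a::euclidean_space \<Rightarrow> real" where
  "ww n x = (if x = 0 then 1 else infnorm x powr (1 / real n - real DIM('a)))"

lemma ww_pos: "ww n x > 0"
  by (simp add: ww_def infnorm_eq_0)

lemma infnorm_borel[measurable]: "infnorm \<in> borel_measurable borel"
  by (intro borel_measurable_continuous_onI continuous_intros)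

lemma ww_borel[measurable]: "ww n \<in> borel_measurable borel"
  unfolding ww_def by measurable

lemma ww_leb: "ww n \<in> borel_measurable lebesgue"
  by (rule measurable_completion) simp



lemma two_powr_bound:
  assumes n: "1 \<le> n"
  shows "2 powr (-1 / real n) \<le> 1 - 1 / (2 * real n)"
proof -
  define y where "y = 1 - 1 / (2 * real n)"
  have y0: "0 < y" using n by (simp add: y_def field_simps)
  have "1 + real n * (- 1 / (2 * real n)) \<le> (1 + (- 1 / (2 * real n))) ^ n"
    by (rule Bernoulli_inequality) (use n in \<open>simp add: field_simps\<close>)
  then have b: "1/2 \<le> y ^ n" using n by (simp add: y_def field_simps)
  have "2 powr (-1 / real n) = (1/2) powr (1 / real n)"
    by (simp add: powr_minus_divide powr_divide)
  also have "\<dots> \<le> (y ^ n) powr (1 / real n)"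
    by (rule powr_mono2) (use b in auto)
  also have "(y ^ n) powr (1 / real n) = y"
    using y0 n by (simp add: powr_realpow[symmetric] powr_powr)
  finally show ?thesis by (simp add: y_def)
qed

lemma geo_bound:
  assumes n: "1 \<le> n" and c: "0 \<le> c"
  shows "(\<Sum>j. ennreal (c * (2 powr (-1 / real n)) ^ (j+1))) \<le> ennreal (c * (2 * real n))"
proof -
  define x where "x = 2 powr (-1 / real n)"
  have x0: "0 < x" by (simp add: x_def)
  have x1: "x \<le> 1 - 1 / (2 * real n)" using two_powr_bound[OF n] by (simp add: x_def)
  have "0 < 1/(2*real n)" using n by simp
  then have x1': "x < 1" using x1 by linarith
  have "(\<lambda>j. x ^ j) sums (1 / (1 - x))" using x0 x1' by (intro geometric_sums) simp
  then have "(\<lambda>j. (c * x) * x ^ j) sums ((c * x) * (1 / (1 - x)))" by (rule sums_mult)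
  then have s: "(\<lambda>j. c * x ^ (j+1)) sums (c * x / (1 - x))" by (simp add: algebra_simps)
  have "(\<Sum>j. ennreal (c * x ^ (j+1))) = ennreal (c * x / (1 - x))"
    by (rule suminf_ennreal_eq[OF _ s]) (use c x0 in simp)
  also have "c * x / (1 - x) \<le> c * (2 * real n)"
  proof -
    have "1 / (2 * real n) \<le> 1 - x" using x1 by simp
    then have "1 \<le> 2 * real n * (1 - x)" using n by (simp add: field_simps)
    then have "1 / (1 - x) \<le> 2 * real n" using x1' by (simp add: divide_le_eq)
    moreover have "x / (1 - x) \<le> 1 / (1 - x)" using x1' by (intro divide_right_mono) auto
    ultimately have "x / (1 - x) \<le> 2 * real n" by linarith
    then have "c * (x / (1 - x)) \<le> c * (2 * real n)" using c by (rule mult_left_mono)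
    then show ?thesis by simp
  qed
  finally show ?thesis by (simp add: x_def ennreal_leI)
qed



lemma CC_borel[simp, measurable]: "CC \<rho> \<in> sets borel"
  by (simp add: CC_def)

lemma ww_upper:
  fixes R :: real
  assumes R: "0 < R" and n: "1 \<le> n"
  shows "(\<integral>\<^sup>+x. indicator (CC R) x * ennreal (ww n x) \<partial>(lborel::'a::euclidean_space measure))
     \<le> ennreal (4 ^ DIM('a) * R powr (1 / real n) * (2 * real n))"
proof -
  define D where "D = real DIM('a)"
  define e where "e = 1 / real n - D"
  have D1: "1 \<le> D" by (simp add: D_def DIM_positive Suc_le_eq)
  have "1 / real n \<le> 1" using n by simp
  then have e0: "e \<le> 0" using D1 by (simp add: e_def)
  define g where "g j = (R / 2^(j+1)) powr e" for j :: nat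
  have pw: "indicator (CC R) x * ennreal (ww n x)
      \<le> (\<Sum>j. ennreal (g j) * indicator (CC (R/2^j)) x)" for x :: 'a
  proof (cases "x \<in> CC R")
    case False then show ?thesis by simp
  next
    case xin: True
    have up: "f j \<le> (\<Sum>j. f j)" for f :: "nat \<Rightarrow> ennreal" and j
      using sum_le_suminf[OF summableI, of "{j}" f] by simp
    show ?thesis
    proof (cases "x = 0")
      case True
      obtain j where j: "R < 2^j" using real_arch_pow[of 2 R] by auto
      have "(2::real)^j \<le> 2 * 2^j" by simp
      then have "R \<le> 2 * 2^j" using j by linarith
      then have "R / 2^(j+1) \<le> 1" by (simp add: field_simps)
      then have "1 powr e \<le> (R / 2^(j+1)) powr e"
        using R e0 by (intro powr_mono2') auto
      then have g1: "1 \<le> g j" by (simp add: g_def)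
      have "0 \<in> (CC (R/2^j) :: 'a set)" using R by (simp add: mem_CC infnorm_0)
      then have "indicator (CC R) x * ennreal (ww n x) \<le> ennreal (g j) * indicator (CC (R/2^j)) x"
        using True g1 by (simp add: ww_def split: split_indicator)
      also have "\<dots> \<le> (\<Sum>j. ennreal (g j) * indicator (CC (R/2^j)) x)" by (rule up)
      finally show ?thesis .
    next
      case False
      define s where "s = infnorm x"
      have s0: "0 < s" using False by (simp add: s_def infnorm_pos_lt)
      have sR: "s \<le> R" using xin by (simp add: s_def mem_CC)
      obtain k where "R / s < 2^k" using real_arch_pow[of 2 "R/s"] by auto
      then have k: "R / 2^k < s" using s0 by (simp add: field_simps)
      have "\<not> R / 2^0 < s" using sR by simp
      then obtain j where j1: "\<not> R / 2^j < s" and j2: "R / 2^(Suc j) < s"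
        using exists_least_lemma[of "\<lambda>j. R / 2^j < s"] k by blast
      have xj: "x \<in> CC (R/2^j)" using j1 by (simp add: mem_CC s_def)
      have "ww n x = s powr e" using False by (simp add: ww_def s_def e_def D_def)
      also have "\<dots> \<le> g j" unfolding g_def
        using j2 e0 R by (intro powr_mono2') auto
      finally have "indicator (CC R) x * ennreal (ww n x) \<le> ennreal (g j) * indicator (CC (R/2^j)) x"
        using xin xj by (simp add: ennreal_leI)
      also have "\<dots> \<le> (\<Sum>j. ennreal (g j) * indicator (CC (R/2^j)) x)" by (rule up)
      finally show ?thesis .
    qed
  qed
  have "(\<integral>\<^sup>+x. indicator (CC R) x * ennreal (ww n x) \<partial>(lborel::'a measure))
      \<le> (\<integral>\<^sup>+x. (\<Sum>j. ennreal (g j) * indicator (CC (R/2^j)) x) \<partial>(lborel::'a measure))"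
    by (rule nn_integral_mono) (rule pw)
  also have "\<dots> = (\<Sum>j. \<integral>\<^sup>+x. ennreal (g j) * indicator (CC (R/2^j)) x \<partial>(lborel::'a measure))"
    by (intro nn_integral_suminf) auto
  also have "\<dots> = (\<Sum>j. ennreal (g j) * emeasure lborel (CC (R/2^j) :: 'a set))"
    by (subst nn_integral_cmult_indicator) auto
  also have "\<dots> = (\<Sum>j. ennreal (4 ^ DIM('a) * R powr (1 / real n) * (2 powr (-1 / real n)) ^ (j+1)))"
  proof (rule suminf_cong)
    fix j :: nat
    define a where "a = R / 2^(j+1)"
    have a0: "0 < a" using R by (simp add: a_def)
    have "2 * (R / 2^j) = 4 * a" by (simp add: a_def field_simps)
    then have "ennreal (g j) * emeasure lborel (CC (R/2^j) :: 'a set) = ennreal (a powr e * (4 * a) ^ DIM('a))"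
      using R by (simp add: emeasure_CC g_def a_def ennreal_mult' powr_ge_zero)
    also have "a powr e * (4 * a) ^ DIM('a) = 4 ^ DIM('a) * a powr (1 / real n)"
      using a0 by (simp add: e_def D_def power_mult_distrib powr_realpow[symmetric] powr_add[symmetric])
    also have "a powr (1 / real n) = R powr (1 / real n) * (2 powr (-1 / real n)) ^ (j+1)"
    proof -
      have h1: "((2::real)^(j+1)) powr (1/real n) = (2 powr (1/real n))^(j+1)"
      proof -
        have "((2::real)^(j+1)) powr (1/real n) = (2 powr real (j+1)) powr (1/real n)"
          by (subst powr_realpow) auto
        also have "\<dots> = (2 powr (1/real n)) powr real (j+1)"
          by (simp add: powr_powr mult.commute)
        also have "\<dots> = (2 powr (1/real n))^(j+1)"
          by (subst powr_realpow) auto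
        finally show ?thesis .
      qed
      have h2: "(2::real) powr (-1/real n) = inverse (2 powr (1/real n))"
        by (simp add: powr_minus[symmetric])
      have "a powr (1 / real n) = R powr (1 / real n) / ((2::real)^(j+1)) powr (1/real n)"
        using R by (simp add: a_def powr_divide)
      also have "\<dots> = R powr (1 / real n) * (2 powr (-1 / real n)) ^ (j+1)"
        unfolding h1 h2 by (simp add: power_inverse divide_inverse)
      finally show ?thesis .
    qed
    finally show "ennreal (g j) * emeasure lborel (CC (R/2^j) :: 'a set) =
        ennreal (4 ^ DIM('a) * R powr (1 / real n) * (2 powr (-1 / real n)) ^ (j+1))"
      by (simp add: mult.assoc)
  qed
  also have "\<dots> \<le> ennreal (4 ^ DIM('a) * R powr (1 / real n) * (2 * real n))"
    by (rule geo_bound[OF n]) simp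
  finally show ?thesis .
qed



definition shell :: "real \<Rightarrow> nat \<Rightarrow> 'a::euclidean_space set" where
  "shell b j = CC (1 / b^j) - CC (1 / b^(j+1))"

lemma shell_borel[simp, measurable]: "shell b j \<in> sets borel"
  by (simp add: shell_def)

lemma shell_sub: "b \<ge> 1 \<Longrightarrow> m \<le> j \<Longrightarrow> shell b j \<subseteq> CC (1 / b^m)"
proof -
  assume b: "b \<ge> 1" and mj: "m \<le> j"
  have "b^m \<le> b^j" by (rule power_increasing[OF mj b])
  then have "1 / b^j \<le> 1 / b^m" using b by (intro divide_left_mono) (auto intro: mult_pos_pos)
  then show ?thesis unfolding shell_def using CC_mono by blast
qed

lemma shell_disj: "b \<ge> 1 \<Longrightarrow> j < k \<Longrightarrow> x \<in> shell b j \<Longrightarrow> x \<notin> shell b k"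
proof -
  assume b: "b \<ge> 1" and jk: "j < k" and x: "x \<in> shell b j"
  have "shell b k \<subseteq> CC (1 / b^(j+1))" using b jk by (intro shell_sub) auto
  then show ?thesis using x unfolding shell_def by blast
qed

lemma sum_shell_indicator:
  assumes b: "b \<ge> 1" and J: "finite J"
  shows "(\<Sum>j\<in>J. indicator (shell b j) x :: ennreal) = (if \<exists>j\<in>J. x \<in> shell b j then 1 else 0)"
proof (cases "\<exists>j\<in>J. x \<in> shell b j")
  case True
  then obtain j0 where j0: "j0 \<in> J" "x \<in> shell b j0" by blast
  have "\<forall>j\<in>J. indicator (shell b j) x = (if j = j0 then 1 else (0::ennreal))"
  proof
    fix j assume "j \<in> J"
    show "indicator (shell b j) x = (if j = j0 then 1 else (0::ennreal))"
    proof (cases "j = j0")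
      case True then show ?thesis using j0 by simp
    next
      case False
      then have "j < j0 \<or> j0 < j" by arith
      then have "x \<notin> shell b j" using shell_disj[OF b] j0(2) by blast
      then show ?thesis using False by simp
    qed
  qed
  then have "(\<Sum>j\<in>J. indicator (shell b j) x :: ennreal) = (\<Sum>j\<in>J. if j = j0 then 1 else 0)"
    by (intro sum.cong) auto
  also have "\<dots> = 1" using J j0(1) by simp
  finally show ?thesis using True by simp
next
  case False then show ?thesis by (simp add: indicator_def)
qed

lemma measure_CC_diff:
  assumes "0 \<le> \<rho>'" "\<rho>' \<le> \<rho>"
  shows "emeasure lborel (CC \<rho> - CC \<rho>' :: 'a::euclidean_space set) = ennreal ((2*\<rho>)^DIM('a) - (2*\<rho>')^DIM('a))"
proof -
  have sub: "CC \<rho>' \<subseteq> (CC \<rho> :: 'a set)" using assms CC_mono by blast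
  have "emeasure lborel (CC \<rho> - CC \<rho>' :: 'a set) \<le> emeasure lborel (CC \<rho> :: 'a set)"
    by (rule emeasure_mono) auto
  also have "\<dots> < top" using assms by (simp add: emeasure_CC)
  finally have fin: "emeasure lborel (CC \<rho> - CC \<rho>' :: 'a set) \<noteq> top" by simp
  have "measure lborel (CC \<rho> - CC \<rho>' :: 'a set) = measure lborel (CC \<rho> :: 'a set) - measure lborel (CC \<rho>' :: 'a set)"
  proof (rule measure_Diff)
    show "emeasure lborel (CC \<rho> :: 'a set) \<noteq> \<infinity>" using assms by (simp add: emeasure_CC)
  qed (use sub in auto)
  also have "\<dots> = (2*\<rho>)^DIM('a) - (2*\<rho>')^DIM('a)" using assms by (simp add: measure_CC)
  finally show ?thesis using fin by (simp add: emeasure_eq_ennreal_measure)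
qed

lemma shell_lower_one:
  fixes b :: real
  assumes b: "2 \<le> b" and n: "1 \<le> n" and j: "j \<le> 2 * n"
  shows "ennreal (2 ^ DIM('a) * (1 - 1/b) / b^2)
     \<le> (\<integral>\<^sup>+x. indicator (shell b j) x * ennreal (ww n x) \<partial>(lborel::'a::euclidean_space measure))"
proof -
  define D where "D = real DIM('a)"
  define e where "e = 1 / real n - D"
  have D1: "1 \<le> D" by (simp add: D_def DIM_positive Suc_le_eq)
  have "1 / real n \<le> 1" using n by simp
  then have e0: "e \<le> 0" using D1 by (simp add: e_def)
  define u where "u = 1 / b^j"
  have u0: "0 < u" using b by (simp add: u_def)
  have pw: "ennreal (u powr e) * indicator (shell b j) x \<le> indicator (shell b j) x * ennreal (ww n x)" for x :: 'a
  proof (cases "x \<in> shell b j")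
    case True
    then have x1: "infnorm x \<le> u" and x2: "x \<notin> CC (1 / b^(j+1))"
      by (auto simp: shell_def mem_CC u_def)
    have "x \<noteq> 0" using x2 b by (auto simp: mem_CC infnorm_0)
    then have "0 < infnorm x" by (simp add: infnorm_pos_lt)
    then have "u powr e \<le> infnorm x powr e" using x1 e0 by (intro powr_mono2') auto
    then show ?thesis using True \<open>x \<noteq> 0\<close> by (simp add: ww_def e_def D_def ennreal_leI)
  qed simp
  have I1: "(\<integral>\<^sup>+x. ennreal (u powr e) * indicator (shell b j) x \<partial>(lborel::'a measure))
      \<le> (\<integral>\<^sup>+x. indicator (shell b j) x * ennreal (ww n x) \<partial>(lborel::'a measure))"
    by (rule nn_integral_mono) (rule pw)
  have I2: "(\<integral>\<^sup>+x. ennreal (u powr e) * indicator (shell b j) x \<partial>(lborel::'a measure))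
      = ennreal (u powr e) * emeasure lborel (shell b j :: 'a set)"
    by (rule nn_integral_cmult_indicator) simp
  have I3: "emeasure lborel (shell b j :: 'a set) = ennreal ((2*u)^DIM('a) - (2*(u/b))^DIM('a))"
  proof -
    have e: "shell b j = CC u - CC (u / b)" by (simp add: shell_def u_def mult.commute)
    have "u / b \<le> u" using u0 b by (simp add: divide_le_eq)
    then show ?thesis unfolding e using u0 b
      by (subst measure_CC_diff) auto
  qed
  have I4: "2 ^ DIM('a) * (1 - 1/b) / b^2 \<le> u powr e * ((2*u)^DIM('a) - (2*(u/b))^DIM('a))"
  proof -
    have "(2*(u/b))^DIM('a) = (2*u)^DIM('a) * (1/b)^DIM('a)" by (simp add: power_divide power_mult_distrib)
    then have eq1: "(2*u)^DIM('a) - (2*(u/b))^DIM('a) = (2*u)^DIM('a) * (1 - (1/b)^DIM('a))"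
      by (simp add: algebra_simps)
    have "u powr e * (2*u)^DIM('a) = 2^DIM('a) * (u powr e * u powr D)"
      using u0 by (simp add: power_mult_distrib powr_realpow D_def)
    also have "u powr e * u powr D = u powr (1 / real n)"
      using u0 by (simp add: powr_add[symmetric] e_def)
    finally have eq2: "u powr e * (2*u)^DIM('a) = 2^DIM('a) * u powr (1 / real n)" .
    have "u powr (1 / real n) = b powr (- (real j / real n))"
      using b by (simp add: u_def powr_divide powr_realpow[symmetric] powr_powr powr_minus_divide)
    also have "\<dots> \<ge> b powr (-2)"
    proof (rule powr_mono)
      show "- 2 \<le> - (real j / real n)" using j n by (simp add: field_simps)
    qed (use b in auto)
    finally have "b powr (-2) \<le> u powr (1 / real n)" .
    then have p1: "1 / b^2 \<le> u powr (1 / real n)" using b by (simp add: powr_minus_divide powr_realpow)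
    have "(1/b)^DIM('a) \<le> (1/b)^1" using b by (intro power_decreasing) (auto simp: DIM_positive Suc_le_eq)
    then have p2: "1 - 1/b \<le> 1 - (1/b)^DIM('a)" by simp
    have "2 ^ DIM('a) * (1 - 1/b) / b^2 = 2 ^ DIM('a) * ((1 / b^2) * (1 - 1/b))" by simp
    also have "\<dots> \<le> 2 ^ DIM('a) * (u powr (1 / real n) * (1 - (1/b)^DIM('a)))"
      using p1 p2 b by (intro mult_left_mono mult_mono) auto
    also have "\<dots> = (u powr e * (2*u)^DIM('a)) * (1 - (1/b)^DIM('a))"
      by (simp only: eq2 mult.assoc)
    also have "\<dots> = u powr e * ((2*u)^DIM('a) - (2*(u/b))^DIM('a))"
      by (simp only: eq1 mult.assoc)
    finally show ?thesis .
  qed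
  have "ennreal (2 ^ DIM('a) * (1 - 1/b) / b^2) \<le> ennreal (u powr e * ((2*u)^DIM('a) - (2*(u/b))^DIM('a)))"
    using I4 by (rule ennreal_leI)
  also have "\<dots> = ennreal (u powr e) * emeasure lborel (shell b j :: 'a set)"
    unfolding I3 by (rule ennreal_mult'[OF powr_ge_zero])
  finally show ?thesis using I1 I2 by simp
qed



lemma shells_lower:
  fixes b :: real and F :: "'a::euclidean_space \<Rightarrow> ennreal"
  assumes b: "2 \<le> b" and n: "1 \<le> n"
    and F: "\<And>j x. n \<le> j \<Longrightarrow> j < 2*n \<Longrightarrow> x \<in> shell b j \<Longrightarrow> \<gamma> \<le> F x"
  shows "\<gamma> * ennreal (real n * (2^DIM('a) * (1 - 1/b) / b^2))
     \<le> (\<integral>\<^sup>+x. F x * ennreal (ww n x) \<partial>(lborel::'a measure))"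
proof -
  define c where "c = 2^DIM('a) * (1 - 1/b) / b^2"
  have b1: "1 \<le> b" using b by simp
  have pw: "\<gamma> * ((\<Sum>j\<in>{n..<2*n}. indicator (shell b j) x) * ennreal (ww n x)) \<le> F x * ennreal (ww n x)" for x :: 'a
  proof (cases "\<exists>j\<in>{n..<2*n}. x \<in> shell b j")
    case True
    then have "\<gamma> \<le> F x" using F by auto
    then show ?thesis using True by (simp add: sum_shell_indicator[OF b1] mult_right_mono)
  next
    case False then show ?thesis by (simp add: sum_shell_indicator[OF b1])
  qed
  have "(\<integral>\<^sup>+x. \<gamma> * ((\<Sum>j\<in>{n..<2*n}. indicator (shell b j) x) * ennreal (ww n x)) \<partial>(lborel::'a measure))
      = \<gamma> * (\<integral>\<^sup>+x. (\<Sum>j\<in>{n..<2*n}. indicator (shell b j) x * ennreal (ww n x)) \<partial>(lborel::'a measure))"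
    by (subst nn_integral_cmult) (auto simp: sum_distrib_right)
  also have "\<dots> = \<gamma> * (\<Sum>j\<in>{n..<2*n}. (\<integral>\<^sup>+x. indicator (shell b j) x * ennreal (ww n x) \<partial>(lborel::'a measure)))"
    by (subst nn_integral_sum) auto
  also have "\<dots> \<ge> \<gamma> * (\<Sum>j\<in>{n..<2*n}. ennreal c)"
    unfolding c_def using shell_lower_one[OF b n, where 'a='a] by (intro mult_left_mono sum_mono) auto
  finally have "\<gamma> * (\<Sum>j\<in>{n..<2*n}. ennreal c) \<le> (\<integral>\<^sup>+x. F x * ennreal (ww n x) \<partial>(lborel::'a measure))"
    using nn_integral_mono[of lborel "\<lambda>x. \<gamma> * ((\<Sum>j\<in>{n..<2*n}. indicator (shell b j) x) * ennreal (ww n x))"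
        "\<lambda>x. F x * ennreal (ww n x)"] pw by (meson order_trans)
  moreover have "(\<Sum>j\<in>{n..<2*n}. ennreal c) = ennreal (real n * c)"
    by (simp add: ennreal_of_nat_eq_real_of_nat ennreal_mult'[symmetric])
  ultimately show ?thesis by (simp add: c_def)
qed



lemma set_int_bound:
  fixes g :: "'a::euclidean_space \<Rightarrow> real"
  assumes g[measurable]: "g \<in> borel_measurable borel" and g0: "\<And>x. 0 \<le> g x"
    and Q[measurable]: "Q \<in> sets borel"
    and B: "(\<integral>\<^sup>+x. indicator Q x * ennreal (g x) \<partial>(lborel::'a measure)) \<le> ennreal B" and B0: "0 \<le> B"
  shows "set_integrable lebesgue Q g \<and> 0 \<le> (\<integral>x\<in>Q. g x \<partial>lebesgue) \<and> (\<integral>x\<in>Q. g x \<partial>lebesgue) \<le> B"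
proof -
  have m: "(\<lambda>x. indicator Q x *\<^sub>R g x) \<in> borel_measurable (lebesgue :: 'a measure)"
    by (rule measurable_completion) simp
  have eq: "(\<integral>\<^sup>+x. ennreal (indicator Q x *\<^sub>R g x) \<partial>(lebesgue::'a measure))
      = (\<integral>\<^sup>+x. indicator Q x * ennreal (g x) \<partial>(lborel::'a measure))"
    unfolding nn_integral_completion by (intro nn_integral_cong) (simp split: split_indicator)
  have fin: "(\<integral>\<^sup>+x. ennreal (indicator Q x *\<^sub>R g x) \<partial>(lebesgue::'a measure)) < \<infinity>"
    unfolding eq using B by (simp add: le_less_trans)
  have int: "integrable lebesgue (\<lambda>x. indicator Q x *\<^sub>R g x)"
    by (rule integrableI_nonneg[OF m]) (use g0 fin in \<open>auto simp: indicator_def\<close>)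
  have "(\<integral>x\<in>Q. g x \<partial>lebesgue) = enn2real (\<integral>\<^sup>+x. ennreal (indicator Q x *\<^sub>R g x) \<partial>(lebesgue::'a measure))"
    unfolding set_lebesgue_integral_def
    by (rule integral_eq_nn_integral[OF m]) (use g0 in \<open>auto simp: indicator_def\<close>)
  also have "\<dots> = enn2real (\<integral>\<^sup>+x. indicator Q x * ennreal (g x) \<partial>(lborel::'a measure))" by (simp only: eq)
  finally have e2: "(\<integral>x\<in>Q. g x \<partial>lebesgue) = enn2real (\<integral>\<^sup>+x. indicator Q x * ennreal (g x) \<partial>(lborel::'a measure))" .
  have "enn2real (\<integral>\<^sup>+x. indicator Q x * ennreal (g x) \<partial>(lborel::'a measure)) \<le> enn2real (ennreal B)"
    by (rule enn2real_mono[OF B]) simp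
  then show ?thesis using int B0 e2 by (simp add: set_integrable_def enn2real_nonneg)
qed

lemma infnorm_cube:
  fixes a z :: "'a::euclidean_space"
  assumes z: "z \<in> cbox a (a + l *\<^sub>R One)"
  shows "\<bar>infnorm z - infnorm a\<bar> \<le> l"
proof -
  have "\<forall>i\<in>Basis. \<bar>(z - a) \<bullet> i\<bar> \<le> l"
    using z by (auto simp: mem_box inner_diff_left algebra_simps)
  then have "infnorm (z - a) \<le> l" by (simp add: infnorm_Max)
  then show ?thesis using absdiff_infnorm[of z a] by linarith
qed

lemma cube_emeasure:
  assumes "0 \<le> l"
  shows "emeasure lborel (cbox a (a + l *\<^sub>R One) :: 'a::euclidean_space set) = ennreal (l ^ DIM('a))"
    and "measure lebesgue (cbox a (a + l *\<^sub>R One) :: 'a::euclidean_space set) = l ^ DIM('a)"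
  using assms by (simp_all add: emeasure_lborel_cbox_eq measure_lborel_cbox_eq inner_add_left prod_constant measure_completion)



lemma Aq_bound:
  fixes q :: real
  assumes n: "1 \<le> n" and q: "1 < q" and Q: "Q \<in> (cubes :: 'a::euclidean_space set set)"
  shows "set_integrable lebesgue Q (ww n) \<and> set_integrable lebesgue Q (\<lambda>x. ww n x powr (-1/(q-1)))
     \<and> 0 \<le> Aq_quantity q (ww n) Q \<and> Aq_quantity q (ww n) Q \<le> 2 * 16^DIM('a) * real n"
proof -
  obtain a l where Qd: "Q = cbox a (a + l *\<^sub>R One)" and l: "0 < l"
    using Q unfolding cubes_def by blast
  define D where "D = real DIM('a)"
  define e where "e = 1 / real n - D"
  define \<kappa> where "\<kappa> = -1/(q-1)"
  define v where "v x = ww n x powr \<kappa>" for x :: 'a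
  define m where "m = infnorm a"
  have D1: "1 \<le> D" by (simp add: D_def DIM_positive Suc_le_eq)
  have "1 / real n \<le> 1" using n by simp
  then have e0: "e \<le> 0" using D1 by (simp add: e_def)
  have k0: "\<kappa> < 0" using q by (simp add: \<kappa>_def)
  have kq: "\<kappa> * (q - 1) = -1" using q by (simp add: \<kappa>_def)
  have Qb[measurable]: "Q \<in> sets borel" by (simp add: Qd)
  have lD: "0 < l ^ DIM('a)" using l by simp
  have emQ: "emeasure lborel Q = ennreal (l ^ DIM('a))" using l by (simp add: Qd cube_emeasure)
  have mQ: "measure lebesgue Q = l ^ DIM('a)" unfolding Qd by (rule cube_emeasure(2)) (use l in simp)
  have zb: "\<bar>infnorm z - m\<bar> \<le> l" if "z \<in> Q" for z
    using infnorm_cube[of z a l] that by (simp add: Qd m_def)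
  have m0: "0 \<le> m" by (simp add: m_def infnorm_pos_le)
  have v_borel[measurable]: "v \<in> borel_measurable borel" unfolding v_def by measurable
  have v0: "0 \<le> v x" for x by (simp add: v_def)
  have ww0: "0 \<le> ww n x" for x using ww_pos[of n x] by simp
  have pow_simp: "((x powr e) powr \<kappa>) powr (q - 1) = x powr (-e)" if "0 < x" for x :: real
  proof -
    have "e * \<kappa> * (q - 1) = - e" using kq by (simp add: mult.assoc)
    then show ?thesis by (simp add: powr_powr)
  qed
  have main: "\<exists>Xw Yv. 0 \<le> Xw \<and> 0 < Yv
      \<and> (\<integral>\<^sup>+x. indicator Q x * ennreal (ww n x) \<partial>(lborel::'a measure)) \<le> ennreal (Xw * l ^ DIM('a))
      \<and> (\<integral>\<^sup>+x. indicator Q x * ennreal (v x) \<partial>(lborel::'a measure)) \<le> ennreal (Yv * l ^ DIM('a))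
      \<and> Xw * Yv powr (q - 1) \<le> 2 * 16^DIM('a) * real n"
  proof (cases "m \<le> 3 * l")
    case True
    define Xw where "Xw = 4 ^ DIM('a) * (4*l) powr (1 / real n) * (2 * real n) / l ^ DIM('a)"
    define Yv where "Yv = ((4*l) powr e) powr \<kappa>"
    have sub: "Q \<subseteq> CC (4*l)"
    proof
      fix z assume "z \<in> Q"
      then have "infnorm z \<le> 4 * l" using zb[of z] True by linarith
      then show "z \<in> CC (4*l)" by (simp add: mem_CC)
    qed
    have "(\<integral>\<^sup>+x. indicator Q x * ennreal (ww n x) \<partial>(lborel::'a measure))
        \<le> (\<integral>\<^sup>+x. indicator (CC (4*l)) x * ennreal (ww n x) \<partial>(lborel::'a measure))"
      using sub by (intro nn_integral_mono) (auto split: split_indicator)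
    also have "\<dots> \<le> ennreal (4 ^ DIM('a) * (4*l) powr (1 / real n) * (2 * real n))"
      using l n by (intro ww_upper) auto
    also have "4 ^ DIM('a) * (4*l) powr (1 / real n) * (2 * real n) = Xw * l ^ DIM('a)"
      using lD by (simp add: Xw_def)
    finally have I1: "(\<integral>\<^sup>+x. indicator Q x * ennreal (ww n x) \<partial>(lborel::'a measure)) \<le> ennreal (Xw * l ^ DIM('a))" .
    have pv: "indicator Q x * ennreal (v x) \<le> ennreal Yv * indicator Q x" if "x \<noteq> 0" for x :: 'a
    proof (cases "x \<in> Q")
      case True
      have "infnorm x \<le> 4 * l" using sub True by (auto simp: mem_CC)
      moreover have "0 < infnorm x" using that by (simp add: infnorm_pos_lt)
      ultimately have pr: "(4*l) powr e \<le> infnorm x powr e" using e0 by (intro powr_mono2') auto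
      have "(infnorm x powr e) powr \<kappa> \<le> ((4*l) powr e) powr \<kappa>"
        using powr_mono2'[of \<kappa> "(4*l) powr e" "infnorm x powr e"] k0 l pr by simp
      then show ?thesis using True that by (simp add: v_def ww_def Yv_def e_def D_def ennreal_leI)
    qed simp
    have "(\<integral>\<^sup>+x. indicator Q x * ennreal (v x) \<partial>(lborel::'a measure))
        \<le> (\<integral>\<^sup>+x. ennreal Yv * indicator Q x \<partial>(lborel::'a measure))"
      by (intro nn_integral_mono_AE) (use AE_lborel_singleton[of 0] pv in \<open>auto\<close>)
    also have "\<dots> = ennreal (Yv * l ^ DIM('a))"
      by (simp add: nn_integral_cmult_indicator emQ ennreal_mult' Yv_def)
    finally have I2: "(\<integral>\<^sup>+x. indicator Q x * ennreal (v x) \<partial>(lborel::'a measure)) \<le> ennreal (Yv * l ^ DIM('a))" .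
    have "Xw * Yv powr (q - 1) = Xw * (4*l) powr (-e)" using l by (simp add: Yv_def pow_simp)
    also have "\<dots> = 4 ^ DIM('a) * (2 * real n) * ((4*l) powr (1 / real n) * (4*l) powr (-e)) / l ^ DIM('a)"
      by (simp add: Xw_def)
    also have "(4*l) powr (1 / real n) * (4*l) powr (-e) = (4*l) ^ DIM('a)"
      using l by (simp add: powr_add[symmetric] e_def D_def powr_realpow)
    also have "4 ^ DIM('a) * (2 * real n) * (4*l) ^ DIM('a) / l ^ DIM('a) = 2 * 16^DIM('a) * real n"
    proof -
      have "(4*l) ^ DIM('a) = 4 ^ DIM('a) * l ^ DIM('a)" by (rule power_mult_distrib)
      moreover have "(16::real) ^ DIM('a) = 4 ^ DIM('a) * 4 ^ DIM('a)"
        by (simp add: power_mult_distrib[symmetric])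
      ultimately show ?thesis using lD l by (simp add: field_simps)
    qed
    finally have I3: "Xw * Yv powr (q - 1) \<le> 2 * 16^DIM('a) * real n" by simp
    have "0 \<le> Xw" using l by (simp add: Xw_def)
    moreover have "0 < Yv" using l by (simp add: Yv_def)
    ultimately show ?thesis using I1 I2 I3 by blast
  next
    case False
    define Xw where "Xw = (m - l) powr e"
    define Yv where "Yv = ((m + l) powr e) powr \<kappa>"
    have ml: "0 < m - l" using False l by linarith
    have zb2: "m - l \<le> infnorm z \<and> infnorm z \<le> m + l \<and> z \<noteq> 0" if "z \<in> Q" for z
    proof -
      have "m - l \<le> infnorm z" "infnorm z \<le> m + l" using zb[OF that] by linarith+
      moreover then have "z \<noteq> 0" using ml by (auto simp: infnorm_0)
      ultimately show ?thesis by simp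
    qed
    have pw: "indicator Q x * ennreal (ww n x) \<le> ennreal Xw * indicator Q x" for x :: 'a
    proof (cases "x \<in> Q")
      case True
      then have "infnorm x powr e \<le> (m - l) powr e" using zb2[OF True] ml e0 by (intro powr_mono2') auto
      then show ?thesis using True zb2[OF True] by (simp add: ww_def Xw_def e_def D_def ennreal_leI)
    qed simp
    have pv: "indicator Q x * ennreal (v x) \<le> ennreal Yv * indicator Q x" for x :: 'a
    proof (cases "x \<in> Q")
      case True
      then have pr: "(m + l) powr e \<le> infnorm x powr e" using zb2[OF True] ml e0 by (intro powr_mono2') auto
      have "(infnorm x powr e) powr \<kappa> \<le> ((m + l) powr e) powr \<kappa>"
        using powr_mono2'[of \<kappa> "(m + l) powr e" "infnorm x powr e"] k0 ml m0 l pr by simp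
      then show ?thesis using True zb2[OF True] by (simp add: v_def ww_def Yv_def e_def D_def ennreal_leI)
    qed simp
    have "(\<integral>\<^sup>+x. indicator Q x * ennreal (ww n x) \<partial>(lborel::'a measure))
        \<le> (\<integral>\<^sup>+x. ennreal Xw * indicator Q x \<partial>(lborel::'a measure))"
      by (rule nn_integral_mono) (rule pw)
    also have "\<dots> = ennreal (Xw * l ^ DIM('a))"
      by (simp add: nn_integral_cmult_indicator emQ ennreal_mult' Xw_def)
    finally have I1: "(\<integral>\<^sup>+x. indicator Q x * ennreal (ww n x) \<partial>(lborel::'a measure)) \<le> ennreal (Xw * l ^ DIM('a))" .
    have "(\<integral>\<^sup>+x. indicator Q x * ennreal (v x) \<partial>(lborel::'a measure))
        \<le> (\<integral>\<^sup>+x. ennreal Yv * indicator Q x \<partial>(lborel::'a measure))"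
      by (rule nn_integral_mono) (rule pv)
    also have "\<dots> = ennreal (Yv * l ^ DIM('a))"
      by (simp add: nn_integral_cmult_indicator emQ ennreal_mult' Yv_def)
    finally have I2: "(\<integral>\<^sup>+x. indicator Q x * ennreal (v x) \<partial>(lborel::'a measure)) \<le> ennreal (Yv * l ^ DIM('a))" .
    have "Xw * Yv powr (q - 1) = (m - l) powr e * (m + l) powr (-e)"
      using ml l pow_simp[of "m + l"] by (simp add: Xw_def Yv_def)
    also have "\<dots> = ((m + l) / (m - l)) powr (-e)"
    proof -
      have A: "((m + l) / (m - l)) powr (-e) = inverse ((m + l) powr e / (m - l) powr e)"
        using ml l by (simp add: powr_minus powr_divide)
      show ?thesis unfolding A inverse_divide by (simp add: powr_minus divide_inverse)
    qed
    also have "\<dots> \<le> 2 powr (-e)"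
      using ml False e0 l by (intro powr_mono2) (auto simp: divide_le_eq)
    also have "\<dots> \<le> 2 powr D"
      using e0 by (intro powr_mono) (auto simp: e_def)
    also have "\<dots> = 2 ^ DIM('a)" by (simp add: D_def powr_realpow)
    also have "\<dots> \<le> 2 * 16^DIM('a) * real n"
    proof -
      have "(2::real) ^ DIM('a) \<le> 16 ^ DIM('a)" by (intro power_mono) auto
      also have "\<dots> \<le> 2 * 16^DIM('a) * real n" using n by simp
      finally show ?thesis .
    qed
    finally have I3: "Xw * Yv powr (q - 1) \<le> 2 * 16^DIM('a) * real n" .
    have "0 \<le> Xw" by (simp add: Xw_def)
    moreover have "0 < Yv" using ml l by (simp add: Yv_def)
    ultimately show ?thesis using I1 I2 I3 by blast
  qed
  then obtain Xw Yv where X0: "0 \<le> Xw" and Y0: "0 < Yv"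
    and I1: "(\<integral>\<^sup>+x. indicator Q x * ennreal (ww n x) \<partial>(lborel::'a measure)) \<le> ennreal (Xw * l ^ DIM('a))"
    and I2: "(\<integral>\<^sup>+x. indicator Q x * ennreal (v x) \<partial>(lborel::'a measure)) \<le> ennreal (Yv * l ^ DIM('a))"
    and I3: "Xw * Yv powr (q - 1) \<le> 2 * 16^DIM('a) * real n" by blast
  have w1: "set_integrable lebesgue Q (ww n) \<and> 0 \<le> (\<integral>x\<in>Q. ww n x \<partial>lebesgue) \<and> (\<integral>x\<in>Q. ww n x \<partial>lebesgue) \<le> Xw * l ^ DIM('a)"
    using X0 lD by (intro set_int_bound[OF ww_borel ww0 Qb I1]) simp
  have v1: "set_integrable lebesgue Q v \<and> 0 \<le> (\<integral>x\<in>Q. v x \<partial>lebesgue) \<and> (\<integral>x\<in>Q. v x \<partial>lebesgue) \<le> Yv * l ^ DIM('a)"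
    using Y0 lD by (intro set_int_bound[OF v_borel v0 Qb I2]) simp
  define aw where "aw = avg Q (ww n)"
  define av where "av = avg Q (\<lambda>x. ww n x powr (-1/(q-1)))"
  have av_eq: "av = (\<integral>x\<in>Q. v x \<partial>lebesgue) / l ^ DIM('a)"
    by (simp add: av_def avg_def mQ v_def \<kappa>_def)
  have aw_eq: "aw = (\<integral>x\<in>Q. ww n x \<partial>lebesgue) / l ^ DIM('a)"
    by (simp add: aw_def avg_def mQ)
  have aw0: "0 \<le> aw" and aw1: "aw \<le> Xw"
    using w1 lD by (auto simp: aw_eq divide_le_eq)
  have av0: "0 \<le> av" and av1: "av \<le> Yv"
    using v1 lD by (auto simp: av_eq divide_le_eq)
  have Aq: "Aq_quantity q (ww n) Q = aw * av powr (q - 1)"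
    by (simp add: Aq_quantity_def aw_def av_def)
  have "aw * av powr (q - 1) \<le> Xw * Yv powr (q - 1)"
    using aw0 aw1 av0 av1 q X0 by (intro mult_mono powr_mono2) auto
  then have "Aq_quantity q (ww n) Q \<le> 2 * 16^DIM('a) * real n" using Aq I3 by linarith
  moreover have "0 \<le> Aq_quantity q (ww n) Q" using Aq aw0 by simp
  moreover have "set_integrable lebesgue Q (\<lambda>x. ww n x powr (-1/(q-1)))"
  proof -
    have "(\<lambda>x. ww n x powr (-1/(q-1))) = v" by (simp add: v_def \<kappa>_def fun_eq_iff)
    then show ?thesis using v1 by simp
  qed
  ultimately show ?thesis using w1 by blast
qed



lemma ww_inAq:
  assumes n: "1 \<le> n" and q: "1 < q"
  shows "in_Aq q (ww n :: 'a::euclidean_space \<Rightarrow> real)"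
    and "0 \<le> Aq_char q (ww n :: 'a \<Rightarrow> real)"
    and "Aq_char q (ww n :: 'a \<Rightarrow> real) \<le> 2 * 16^DIM('a) * real n"
proof -
  have ww0: "0 \<le> ww n x" for x :: 'a using ww_pos[of n x] by simp
  have loc: "set_integrable lebesgue K (ww n :: 'a \<Rightarrow> real)" if K: "compact K" for K :: "'a set"
  proof -
    obtain R where R: "\<forall>x\<in>K. norm x \<le> R" using compact_imp_bounded[OF K] bounded_iff by blast
    define R' where "R' = max R 1"
    have sub: "K \<subseteq> CC R'"
    proof
      fix x assume "x \<in> K"
      then have "infnorm x \<le> R'" using R infnorm_le_norm[of x] by (simp add: R'_def) (meson order_trans max.coboundedI1)
      then show "x \<in> CC R'" by (simp add: mem_CC)
    qed
    have Kb: "K \<in> sets borel" using K by (simp add: borel_closed compact_imp_closed)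
    have "(\<integral>\<^sup>+x. indicator K x * ennreal (ww n x) \<partial>(lborel::'a measure))
        \<le> (\<integral>\<^sup>+x. indicator (CC R') x * ennreal (ww n x) \<partial>(lborel::'a measure))"
      using sub by (intro nn_integral_mono) (auto split: split_indicator)
    also have "\<dots> \<le> ennreal (4 ^ DIM('a) * R' powr (1 / real n) * (2 * real n))"
      using n by (intro ww_upper) (auto simp: R'_def)
    finally show ?thesis
      using set_int_bound[OF ww_borel ww0 Kb] by simp
  qed
  have cubes_ne: "CC 1 \<in> (cubes :: 'a set set)" by (rule CC_cubes) simp
  have bdd: "bdd_above (Aq_quantity q (ww n :: 'a \<Rightarrow> real) ` cubes)"
    using Aq_bound[OF n q] by (intro bdd_aboveI2) blast
  show "in_Aq q (ww n :: 'a::euclidean_space \<Rightarrow> real)"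
    unfolding in_Aq_def weight_def
    using ww_leb ww_pos loc Aq_bound[OF n q] bdd by blast
  show "0 \<le> Aq_char q (ww n :: 'a \<Rightarrow> real)"
    unfolding Aq_char_def using Aq_bound[OF n q cubes_ne] bdd cubes_ne
    by (intro cSUP_upper2) auto
  show "Aq_char q (ww n :: 'a \<Rightarrow> real) \<le> 2 * 16^DIM('a) * real n"
    unfolding Aq_char_def using Aq_bound[OF n q] cubes_ne
    by (intro cSUP_least) auto
qed



lemma epowr_ennreal: "0 \<le> x \<Longrightarrow> epowr (ennreal x) a = ennreal (x powr a)"
  by (simp add: epowr_def)

lemma epowr_mono: assumes "0 \<le> a" "x \<le> y" shows "epowr x a \<le> epowr y a"
proof (cases "y = top")
  case True then show ?thesis by (simp add: epowr_def)
next
  case False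
  then have "x \<noteq> top" using assms(2) by (auto simp: top_unique)
  then have "enn2real x \<le> enn2real y" using assms(2) False by (simp add: enn2real_mono less_top)
  then show ?thesis using False \<open>x \<noteq> top\<close> assms(1)
    by (simp add: epowr_def powr_mono2 ennreal_leI)
qed

lemma Pr_indicator:
  fixes Q A :: "'a::euclidean_space set"
  assumes r: "0 < r" "r < 1" and mQ: "0 < measure lebesgue Q"
    and QA: "r * measure lebesgue Q < measure lebesgue (Q \<inter> A)"
  shows "Pr r Q (\<lambda>y. \<bar>indicator A y :: real\<bar>) = 1"
proof -
  have "{l. measure lebesgue {x\<in>Q. \<bar>indicator A x :: real\<bar> > l} \<le> r * measure lebesgue Q} = {1..}"
  proof (intro set_eqI iffI)
    fix l assume "l \<in> {l. measure lebesgue {x\<in>Q. \<bar>indicator A x :: real\<bar> > l} \<le> r * measure lebesgue Q}"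
    then have l: "measure lebesgue {x\<in>Q. \<bar>indicator A x :: real\<bar> > l} \<le> r * measure lebesgue Q" by simp
    show "l \<in> {1..}"
    proof (rule ccontr)
      assume "l \<notin> {1..}"
      then have l1: "l < 1" by simp
      show False
      proof (cases "l < 0")
        case True
        then have "{x\<in>Q. \<bar>indicator A x :: real\<bar> > l} = Q" by (auto simp: indicator_def)
        then show False using l mQ r by simp
      next
        case False
        then have "{x\<in>Q. \<bar>indicator A x :: real\<bar> > l} = Q \<inter> A" using l1 by (auto simp: indicator_def)
        then show False using l QA by simp
      qed
    qed
  next
    fix l :: real assume "l \<in> {1..}"
    then have E: "{x\<in>Q. \<bar>indicator A x :: real\<bar> > l} = {}" by (auto simp: indicator_def)
    show "l \<in> {l. measure lebesgue {x\<in>Q. \<bar>indicator A x :: real\<bar> > l} \<le> r * measure lebesgue Q}"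
      unfolding mem_Collect_eq E using r mQ by simp
  qed
  then show ?thesis by (simp add: Pr_def)
qed

lemma measure_leb_CC: "0 \<le> \<rho> \<Longrightarrow> measure lebesgue (CC \<rho> :: 'a::euclidean_space set) = (2*\<rho>)^DIM('a)"
  by (simp add: measure_completion measure_CC del: measure_lborel_cbox_eq)

lemma measure_leb_shell:
  assumes b: "1 \<le> b"
  shows "measure lebesgue (shell b j :: 'a::euclidean_space set) = (2 / b^j)^DIM('a) * (1 - (1/b)^DIM('a))"
proof -
  have e: "shell b j = CC (1/b^j) - (CC (1/b^j / b) :: 'a set)" by (simp add: shell_def mult.commute)
  have le: "1/b^j / b \<le> 1/b^j" using b by (simp add: divide_le_eq)
  have "emeasure lborel (shell b j :: 'a set) = ennreal ((2*(1/b^j))^DIM('a) - (2*(1/b^j/b))^DIM('a))"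
    unfolding e using b le by (subst measure_CC_diff) auto
  moreover have "(2*(1/b^j))^DIM('a) - (2*(1/b^j/b))^DIM('a) = (2 / b^j)^DIM('a) * (1 - (1/b)^DIM('a))"
  proof -
    have "2*(1/b^j/b) = (2/b^j) * (1/b)" by simp
    then have "(2*(1/b^j/b))^DIM('a) = (2/b^j)^DIM('a) * (1/b)^DIM('a)" by (simp only: power_mult_distrib)
    moreover have "2*(1/b^j) = 2/b^j" by simp
    ultimately show ?thesis by (simp add: right_diff_distrib)
  qed
  moreover have "0 \<le> (2 / b^j)^DIM('a) * (1 - (1/b)^DIM('a))"
    using b by (intro mult_nonneg_nonneg) (auto simp: power_le_one)
  ultimately show ?thesis
    by (simp add: measure_completion measure_def)
qed



lemma ennreal_indicator_powr:
  assumes "0 < p"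
  shows "ennreal (\<bar>indicator A x :: real\<bar> powr p * w) = indicator A x * ennreal w"
  using assms by (simp split: split_indicator)

lemma epowr_indicator:
  assumes "0 < p"
  shows "epowr (ennreal \<bar>indicator A x :: real\<bar>) p = indicator A x"
  using assms by (simp add: epowr_def split: split_indicator)

lemma in_Lpw_indicator:
  fixes A :: "'a::euclidean_space set"
  assumes p: "0 < p" and A: "A \<in> sets borel"
    and fin: "(\<integral>\<^sup>+x. indicator A x * ennreal (w x) \<partial>(lborel::'a measure)) < \<infinity>"
  shows "in_Lpw p w (indicator A :: 'a \<Rightarrow> real)"
proof -
  have "(indicator A :: 'a \<Rightarrow> real) \<in> borel_measurable lebesgue"
    by (rule measurable_completion) (use A in simp)
  moreover have "(\<integral>\<^sup>+x. ennreal (\<bar>indicator A x :: real\<bar> powr p * w x) \<partial>(lebesgue::'a measure))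
      = (\<integral>\<^sup>+x. indicator A x * ennreal (w x) \<partial>(lborel::'a measure))"
    unfolding nn_integral_completion ennreal_indicator_powr[OF p] ..
  ultimately show ?thesis using fin by (simp add: in_Lpw_def)
qed

lemma Lpw_norm_indicator:
  fixes A :: "'a::euclidean_space set"
  assumes p: "0 < p"
  shows "Lpw_norm p w (\<lambda>x. ennreal \<bar>indicator A x :: real\<bar>)
     = epowr (\<integral>\<^sup>+x. indicator A x * ennreal (w x) \<partial>(lborel::'a measure)) (1/p)"
  unfolding Lpw_norm_def nn_integral_completion epowr_indicator[OF p] ..

lemma Lpw_norm_lower:
  fixes F :: "'a::euclidean_space \<Rightarrow> ennreal"
  assumes p: "0 < p" and L: "ennreal L \<le> (\<integral>\<^sup>+x. epowr (F x) p * ennreal (w x) \<partial>(lborel::'a measure))"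
    and L0: "0 \<le> L"
  shows "ennreal (L powr (1/p)) \<le> Lpw_norm p w F"
proof -
  have "ennreal (L powr (1/p)) = epowr (ennreal L) (1/p)" using L0 by (simp add: epowr_ennreal)
  also have "\<dots> \<le> epowr (\<integral>\<^sup>+x. epowr (F x) p * ennreal (w x) \<partial>(lborel::'a measure)) (1/p)"
    using p L by (intro epowr_mono) auto
  also have "\<dots> = Lpw_norm p w F" unfolding Lpw_norm_def nn_integral_completion ..
  finally show ?thesis .
qed

lemma final_contra:
  assumes eps: "0 < \<epsilon>" and K: "\<And>n::nat. 1 \<le> n \<Longrightarrow> real n powr \<epsilon> \<le> K"
  shows False
proof -
  define y where "y = (max K 1 + 1) powr (1/\<epsilon>)"
  define n where "n = nat \<lceil>y\<rceil> + 1"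
  have y0: "0 < y" by (simp add: y_def)
  have n1: "1 \<le> n" by (simp add: n_def)
  have ny: "y \<le> real n" by (simp add: n_def) linarith
  have "max K 1 + 1 = y powr \<epsilon>" using eps by (simp add: y_def powr_powr)
  also have "\<dots> \<le> real n powr \<epsilon>" using y0 ny eps by (intro powr_mono2) auto
  also have "\<dots> \<le> K" using K[OF n1] .
  finally show False by simp
qed



lemma partA:
  fixes p t q r \<eta> \<alpha> C b :: real
  assumes p: "0 < p" and t: "0 < t" and q: "1 < q" and r: "0 < r" "r < 1"
    and \<eta>: "0 < \<eta>" "\<eta> < 1" and \<alpha>: "0 \<le> \<alpha>" and C: "0 < C"
    and b: "2 \<le> b" "1/b < 1 - r"
    and H: "\<forall>(w :: 'a::euclidean_space \<Rightarrow> real) S f.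
           in_Aq q w \<longrightarrow> sparse \<eta> S \<longrightarrow> in_Lpw p w f \<longrightarrow>
           Lpw_norm p w (sparse_op r t S f)
             \<le> ennreal (C * Aq_char q w powr \<alpha>) * Lpw_norm p w (\<lambda>x. ennreal \<bar>f x\<bar>)"
    and n: "1 \<le> n"
  shows "(real n * (2^DIM('a) * (1 - 1/b) / b^2)) powr (1/p)
     \<le> C * (2 * 16^DIM('a) * real n) powr \<alpha> * (b^DIM('a) * 2^DIM('a)) powr (1/p)"
proof -
  define w where "w = (ww n :: 'a \<Rightarrow> real)"
  define f where "f = (indicator (shell b 0) :: 'a \<Rightarrow> real)"
  define S where "S = {CC 1 :: 'a set}"
  define D where "D = real DIM('a)"
  define e where "e = 1 / real n - D"
  have D1: "1 \<le> D" by (simp add: D_def DIM_positive Suc_le_eq)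
  have "1 / real n \<le> 1" using n by simp
  then have e0: "e \<le> 0" using D1 by (simp add: e_def)
  have b1: "1 \<le> b" using b by simp
  have Aq: "in_Aq q w" using ww_inAq[OF n q] by (simp add: w_def)
  have Aq0: "0 \<le> Aq_char q w" using ww_inAq[OF n q] by (simp add: w_def)
  have Aq1: "Aq_char q w \<le> 2 * 16^DIM('a) * real n" using ww_inAq[OF n q] by (simp add: w_def)
  have mCC1: "measure lebesgue (CC 1 :: 'a set) = 2^DIM('a)" using measure_leb_CC[of 1, where 'a='a] by simp
  have sp: "sparse \<eta> S"
    unfolding sparse_def S_def
  proof (intro conjI exI[of _ "\<lambda>Q. Q"])
    show "{CC 1 :: 'a set} \<subseteq> cubes" using CC_cubes[of 1] by simp
    show "disjoint_family_on (\<lambda>Q. Q) {CC 1 :: 'a set}" by (simp add: disjoint_family_on_def)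
    show "\<forall>Q\<in>{CC 1 :: 'a set}. Q \<subseteq> Q \<and> Q \<in> sets lebesgue \<and> \<eta> * measure lebesgue Q \<le> measure lebesgue Q"
      using \<eta> by (simp add: CC_sets_leb mCC1)
  qed
  have pwV: "indicator (shell b 0) x * ennreal (w x) \<le> ennreal (b^DIM('a)) * indicator (CC 1) x" for x :: 'a
  proof (cases "x \<in> shell b 0")
    case True
    then have x1: "x \<in> CC 1" and x2: "\<not> infnorm x \<le> 1/b" by (auto simp: shell_def mem_CC)
    have "0 < 1/b" using b by simp
    then have xpos: "0 < infnorm x" "1/b \<le> infnorm x" using x2 by linarith+
    then have "x \<noteq> 0" by (auto simp: infnorm_0)
    have "infnorm x powr e \<le> (1/b) powr e" using xpos e0 b by (intro powr_mono2') auto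
    also have "(1/b) powr e = b powr (-e)" using b by (simp add: powr_minus_divide powr_divide)
    also have "\<dots> \<le> b powr D" using b1 by (intro powr_mono) (auto simp: e_def)
    also have "\<dots> = b ^ DIM('a)" using b by (simp add: D_def powr_realpow)
    finally have "w x \<le> b ^ DIM('a)" using \<open>x \<noteq> 0\<close> by (simp add: w_def ww_def e_def D_def)
    then show ?thesis using True x1 by (simp add: ennreal_leI)
  qed simp
  have IV: "(\<integral>\<^sup>+x. indicator (shell b 0) x * ennreal (w x) \<partial>(lborel::'a measure)) \<le> ennreal (b^DIM('a) * 2^DIM('a))"
  proof -
    have "(\<integral>\<^sup>+x. indicator (shell b 0) x * ennreal (w x) \<partial>(lborel::'a measure))
        \<le> (\<integral>\<^sup>+x. ennreal (b^DIM('a)) * indicator (CC 1) x \<partial>(lborel::'a measure))"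
      by (rule nn_integral_mono) (rule pwV)
    also have "\<dots> = ennreal (b^DIM('a) * 2^DIM('a))"
      using b by (simp add: nn_integral_cmult_indicator emeasure_CC ennreal_mult')
    finally show ?thesis .
  qed
  have Lp: "in_Lpw p w f" unfolding f_def
    by (rule in_Lpw_indicator[OF p]) (use IV in \<open>auto simp: le_less_trans\<close>)
  have H1: "Lpw_norm p w (sparse_op r t S f) \<le> ennreal (C * Aq_char q w powr \<alpha>) * Lpw_norm p w (\<lambda>x. ennreal \<bar>f x\<bar>)"
    using H Aq sp Lp by blast
  have Pr1: "Pr r (CC 1) (\<lambda>y. \<bar>f y\<bar>) = 1" unfolding f_def
  proof (rule Pr_indicator[OF r])
    show "0 < measure lebesgue (CC 1 :: 'a set)" by (simp add: mCC1)
    have "CC 1 \<inter> shell b 0 = (shell b 0 :: 'a set)" using shell_sub[OF b1, of 0 0] by auto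
    moreover have "measure lebesgue (shell b 0 :: 'a set) = 2^DIM('a) * (1 - (1/b)^DIM('a))"
      using measure_leb_shell[OF b1, of 0] by simp
    moreover have "(1/b)^DIM('a) \<le> (1/b)^1" using b by (intro power_decreasing) (auto simp: DIM_positive Suc_le_eq)
    ultimately show "r * measure lebesgue (CC 1 :: 'a set) < measure lebesgue (CC 1 \<inter> shell b 0 :: 'a set)"
      using b by (simp add: mCC1)
  qed
  have spv: "sparse_op r t S f x = ennreal (indicator (CC 1) x)" for x
  proof -
    have "sparse_op r t S f x = epowr (ennreal (1 powr t * indicator (CC 1) x)) (1/t)"
      unfolding sparse_op_def S_def by (simp add: nn_integral_count_space_finite Pr1)
    also have "\<dots> = ennreal (indicator (CC 1) x)" using t
      by (simp add: epowr_def split: split_indicator)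
    finally show ?thesis .
  qed
  have low: "1 * ennreal (real n * (2^DIM('a) * (1 - 1/b) / b^2))
     \<le> (\<integral>\<^sup>+x. epowr (sparse_op r t S f x) p * ennreal (ww n x) \<partial>(lborel::'a measure))"
  proof (rule shells_lower[OF b(1) n])
    fix j x assume "n \<le> j" "j < 2*n" "x \<in> (shell b j :: 'a set)"
    then have "x \<in> CC 1" using shell_sub[OF b1, of 0 j] by auto
    then show "1 \<le> epowr (sparse_op r t S f x) p" using p by (simp add: spv epowr_def)
  qed
  have c0: "0 \<le> real n * (2^DIM('a) * (1 - 1/b) / b^2)" using b by simp
  have "ennreal ((real n * (2^DIM('a) * (1 - 1/b) / b^2)) powr (1/p)) \<le> Lpw_norm p w (sparse_op r t S f)"
    by (rule Lpw_norm_lower[OF p _ c0]) (use low in \<open>simp add: w_def\<close>)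
  also note H1
  also have "ennreal (C * Aq_char q w powr \<alpha>) \<le> ennreal (C * (2 * 16^DIM('a) * real n) powr \<alpha>)"
    using Aq0 Aq1 C \<alpha> by (intro ennreal_leI mult_left_mono powr_mono2) auto
  also have "Lpw_norm p w (\<lambda>x. ennreal \<bar>f x\<bar>) \<le> ennreal ((b^DIM('a) * 2^DIM('a)) powr (1/p))"
  proof -
    have "Lpw_norm p w (\<lambda>x. ennreal \<bar>f x\<bar>) = epowr (\<integral>\<^sup>+x. indicator (shell b 0) x * ennreal (w x) \<partial>(lborel::'a measure)) (1/p)"
      unfolding f_def by (rule Lpw_norm_indicator[OF p])
    also have "\<dots> \<le> epowr (ennreal (b^DIM('a) * 2^DIM('a))) (1/p)"
      using p IV by (intro epowr_mono) auto
    also have "\<dots> = ennreal ((b^DIM('a) * 2^DIM('a)) powr (1/p))" using b by (simp add: epowr_ennreal)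
    finally show ?thesis .
  qed
  finally have "ennreal ((real n * (2^DIM('a) * (1 - 1/b) / b^2)) powr (1/p))
      \<le> ennreal (C * (2 * 16^DIM('a) * real n) powr \<alpha>) * ennreal ((b^DIM('a) * 2^DIM('a)) powr (1/p))"
    by (simp add: mult_mono)
  also have "\<dots> = ennreal (C * (2 * 16^DIM('a) * real n) powr \<alpha> * (b^DIM('a) * 2^DIM('a)) powr (1/p))"
    using C by (simp add: ennreal_mult')
  finally show ?thesis
    using C by (subst (asm) ennreal_le_iff) auto
qed



lemma partB:
  fixes p t q r \<eta> \<alpha> C b :: real
  assumes p: "0 < p" and t: "0 < t" and q: "1 < q" and r: "0 < r" "r < 1"
    and \<eta>: "0 < \<eta>" "\<eta> < 1" and \<alpha>: "0 \<le> \<alpha>" and C: "0 < C"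
    and b: "2 \<le> b" "1/b \<le> 1 - \<eta>" "1/b < 1 - r"
    and H: "\<forall>(w :: 'a::euclidean_space \<Rightarrow> real) S f.
           in_Aq q w \<longrightarrow> sparse \<eta> S \<longrightarrow> in_Lpw p w f \<longrightarrow>
           Lpw_norm p w (sparse_op r t S f)
             \<le> ennreal (C * Aq_char q w powr \<alpha>) * Lpw_norm p w (\<lambda>x. ennreal \<bar>f x\<bar>)"
    and n: "1 \<le> n"
  shows "(real n powr (p/t) * (real n * (2^DIM('a) * (1 - 1/b) / b^2))) powr (1/p)
     \<le> C * (2 * 16^DIM('a) * real n) powr \<alpha> * (4^DIM('a) * (2 * real n)) powr (1/p)"
proof -
  define w where "w = (ww n :: 'a \<Rightarrow> real)"
  define f where "f = (indicator (CC 1) :: 'a \<Rightarrow> real)"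
  define S where "S = (\<lambda>k. CC (1/b^k) :: 'a set) ` {..<2*n}"
  have b1: "1 \<le> b" using b by simp
  have Aq: "in_Aq q w" using ww_inAq[OF n q] by (simp add: w_def)
  have Aq0: "0 \<le> Aq_char q w" using ww_inAq[OF n q] by (simp add: w_def)
  have Aq1: "Aq_char q w \<le> 2 * 16^DIM('a) * real n" using ww_inAq[OF n q] by (simp add: w_def)
  have mCC: "measure lebesgue (CC \<rho> :: 'a set) = (2*\<rho>)^DIM('a)" if "0 \<le> \<rho>" for \<rho>
    using measure_leb_CC[OF that, where 'a='a] by simp
  have bk: "0 < 1/b^k" for k using b by simp
  have bk1: "1/b^k \<le> 1" for k using b by simp
  have powb: "(1/b)^DIM('a) \<le> 1/b" using b
    using power_decreasing[of 1 "DIM('a)" "1/b"] by (simp add: DIM_positive Suc_le_eq)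
  define E where "E Q = Q - CC ((THE \<rho>. 0 \<le> \<rho> \<and> Q = CC \<rho>) / b)" for Q :: "'a set"
  have Ek: "E (CC (1/b^k)) = shell b k" for k
  proof -
    have "(THE \<rho>. 0 \<le> \<rho> \<and> CC (1/b^k) = (CC \<rho> :: 'a set)) = 1/b^k"
    proof (rule the_equality)
      show "0 \<le> 1/b^k \<and> CC (1/b^k) = (CC (1/b^k) :: 'a set)" using bk[of k] by simp
    next
      fix \<rho> assume "0 \<le> \<rho> \<and> CC (1/b^k) = (CC \<rho> :: 'a set)"
      then show "\<rho> = 1/b^k" using CC_inj[of "1/b^k" \<rho>] bk[of k] by auto
    qed
    then show ?thesis by (simp add: E_def shell_def mult.commute)
  qed
  have sp: "sparse \<eta> S"
    unfolding sparse_def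
  proof (intro conjI exI[of _ E])
    show "S \<subseteq> cubes" unfolding S_def using CC_cubes bk by blast
    show "disjoint_family_on E S"
      unfolding disjoint_family_on_def S_def
    proof (intro ballI impI)
      fix Q Q' assume "Q \<in> (\<lambda>k. CC (1/b^k) :: 'a set) ` {..<2*n}" "Q' \<in> (\<lambda>k. CC (1/b^k) :: 'a set) ` {..<2*n}" "Q \<noteq> Q'"
      then obtain j k where jk: "Q = CC (1/b^j)" "Q' = CC (1/b^k)" "j \<noteq> k" by auto
      then have "j < k \<or> k < j" by arith
      then show "E Q \<inter> E Q' = {}" unfolding jk Ek using shell_disj[OF b1] by blast
    qed
    show "\<forall>Q\<in>S. E Q \<subseteq> Q \<and> E Q \<in> sets lebesgue \<and> \<eta> * measure lebesgue Q \<le> measure lebesgue (E Q)"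
    proof
      fix Q assume "Q \<in> S"
      then obtain k where k: "Q = CC (1/b^k)" unfolding S_def by auto
      have "E Q \<subseteq> Q" by (simp add: E_def)
      moreover have "E Q \<in> sets lebesgue" unfolding k Ek by (rule sets_completionI_sets) simp
      moreover have "\<eta> * measure lebesgue Q \<le> measure lebesgue (E Q)"
      proof -
        have "measure lebesgue (E Q) = (2 / b^k)^DIM('a) * (1 - (1/b)^DIM('a))"
          unfolding k Ek by (rule measure_leb_shell[OF b1])
        moreover have "measure lebesgue Q = (2 / b^k)^DIM('a)" unfolding k using mCC[of "1/b^k"] bk[of k] by simp
        moreover have "\<eta> \<le> 1 - (1/b)^DIM('a)" using powb b by linarith
        moreover have "0 \<le> (2 / b^k)^DIM('a)" using b by simp
        ultimately show ?thesis by (metis mult.commute mult_left_mono)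
      qed
      ultimately show "E Q \<subseteq> Q \<and> E Q \<in> sets lebesgue \<and> \<eta> * measure lebesgue Q \<le> measure lebesgue (E Q)" by blast
    qed
  qed
  have IV: "(\<integral>\<^sup>+x. indicator (CC 1) x * ennreal (w x) \<partial>(lborel::'a measure)) \<le> ennreal (4^DIM('a) * (2 * real n))"
    using ww_upper[of 1 n, where 'a='a] n by (simp add: w_def)
  have Lp: "in_Lpw p w f" unfolding f_def
    by (rule in_Lpw_indicator[OF p]) (use IV in \<open>auto simp: le_less_trans\<close>)
  have H1: "Lpw_norm p w (sparse_op r t S f) \<le> ennreal (C * Aq_char q w powr \<alpha>) * Lpw_norm p w (\<lambda>x. ennreal \<bar>f x\<bar>)"
    using H Aq sp Lp by blast
  have Pr1: "Pr r Q (\<lambda>y. \<bar>f y\<bar>) = 1" if "Q \<in> S" for Q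
  proof -
    obtain k where k: "Q = CC (1/b^k)" using \<open>Q \<in> S\<close> unfolding S_def by auto
    show ?thesis unfolding f_def
    proof (rule Pr_indicator[OF r])
      show "0 < measure lebesgue Q" unfolding k using mCC[of "1/b^k"] bk[of k] by simp
      have "Q \<inter> CC 1 = Q" unfolding k using CC_mono[OF bk1[of k]] by auto
      then show "r * measure lebesgue Q < measure lebesgue (Q \<inter> CC 1)"
        using \<open>0 < measure lebesgue Q\<close> r by simp
    qed
  qed
  have finS: "finite S" by (simp add: S_def)
  have spv: "ennreal (real n powr (1/t)) \<le> sparse_op r t S f x" if "x \<in> shell b j" "n \<le> j" "j < 2*n" for x j
  proof -
    define T where "T = (\<lambda>k. CC (1/b^k) :: 'a set) ` {..j}"
    have TS: "T \<subseteq> S" using that by (auto simp: T_def S_def)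
    have inj: "inj_on (\<lambda>k. CC (1/b^k) :: 'a set) {..j}"
    proof (rule inj_onI)
      fix k k' assume "CC (1/b^k) = (CC (1/b^k') :: 'a set)"
      then have "1/b^k = 1/b^k'" using CC_inj bk by (metis less_imp_le)
      then have "b^k = b^k'" using b by simp
      then show "k = k'" using b by (simp add: power_inject_exp)
    qed
    have xT: "x \<in> Q" if "Q \<in> T" for Q
    proof -
      obtain k where k: "Q = CC (1/b^k)" "k \<le> j" using \<open>Q \<in> T\<close> by (auto simp: T_def)
      show ?thesis using shell_sub[OF b1 k(2)] \<open>x \<in> shell b j\<close> k(1) by auto
    qed
    have cT: "card T = Suc j" by (simp add: T_def card_image[OF inj])
    have "ennreal (real n) \<le> ennreal (real (Suc j))" using \<open>n \<le> j\<close> by (intro ennreal_leI) simp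
    also have "\<dots> = of_nat (card T)" unfolding cT by (rule ennreal_of_nat_eq_real_of_nat[symmetric])
    finally have "ennreal (real n) \<le> of_nat (card T)" .
    also have "of_nat (card T) = (\<Sum>Q\<in>T. indicator Q x :: ennreal)" using xT by simp
    also have "\<dots> \<le> (\<Sum>Q\<in>S. indicator Q x :: ennreal)"
      using finS TS by (intro sum_mono2) auto
    also have "\<dots> = (\<Sum>Q\<in>S. ennreal (Pr r Q (\<lambda>y. \<bar>f y\<bar>) powr t * indicator Q x))"
      using Pr1 by (intro sum.cong) (auto split: split_indicator)
    also have "\<dots> = (\<integral>\<^sup>+Q. ennreal (Pr r Q (\<lambda>y. \<bar>f y\<bar>) powr t * indicator Q x) \<partial>count_space S)"
      using finS by (simp add: nn_integral_count_space_finite)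
    finally have "epowr (ennreal (real n)) (1/t) \<le> sparse_op r t S f x"
      unfolding sparse_op_def using t by (intro epowr_mono) auto
    then show ?thesis by (simp add: epowr_ennreal)
  qed
  have low: "ennreal (real n powr (p/t)) * ennreal (real n * (2^DIM('a) * (1 - 1/b) / b^2))
     \<le> (\<integral>\<^sup>+x. epowr (sparse_op r t S f x) p * ennreal (ww n x) \<partial>(lborel::'a measure))"
  proof (rule shells_lower[OF b(1) n])
    fix j x assume jx: "n \<le> j" "j < 2*n" "x \<in> (shell b j :: 'a set)"
    have "ennreal (real n powr (p/t)) = epowr (ennreal (real n powr (1/t))) p"
      using t by (simp add: epowr_ennreal powr_powr)
    also have "\<dots> \<le> epowr (sparse_op r t S f x) p"
      using p spv[OF jx(3) jx(1) jx(2)] by (intro epowr_mono) auto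
    finally show "ennreal (real n powr (p/t)) \<le> epowr (sparse_op r t S f x) p" .
  qed
  have c0: "0 \<le> real n powr (p/t) * (real n * (2^DIM('a) * (1 - 1/b) / b^2))" using b by simp
  have "ennreal ((real n powr (p/t) * (real n * (2^DIM('a) * (1 - 1/b) / b^2))) powr (1/p)) \<le> Lpw_norm p w (sparse_op r t S f)"
  proof (rule Lpw_norm_lower[OF p _ c0])
    have eqm: "ennreal (real n powr (p/t) * (real n * (2^DIM('a) * (1 - 1/b) / b^2)))
       = ennreal (real n powr (p/t)) * ennreal (real n * (2^DIM('a) * (1 - 1/b) / b^2))"
      by (rule ennreal_mult') simp
    show "ennreal (real n powr (p/t) * (real n * (2^DIM('a) * (1 - 1/b) / b^2)))
       \<le> (\<integral>\<^sup>+x. epowr (sparse_op r t S f x) p * ennreal (w x) \<partial>(lborel::'a measure))"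
      unfolding eqm w_def by (rule low)
  qed
  also note H1
  also have "ennreal (C * Aq_char q w powr \<alpha>) \<le> ennreal (C * (2 * 16^DIM('a) * real n) powr \<alpha>)"
    using Aq0 Aq1 C \<alpha> by (intro ennreal_leI mult_left_mono powr_mono2) auto
  also have "Lpw_norm p w (\<lambda>x. ennreal \<bar>f x\<bar>) \<le> ennreal ((4^DIM('a) * (2 * real n)) powr (1/p))"
  proof -
    have "Lpw_norm p w (\<lambda>x. ennreal \<bar>f x\<bar>) = epowr (\<integral>\<^sup>+x. indicator (CC 1) x * ennreal (w x) \<partial>(lborel::'a measure)) (1/p)"
      unfolding f_def by (rule Lpw_norm_indicator[OF p])
    also have "\<dots> \<le> epowr (ennreal (4^DIM('a) * (2 * real n))) (1/p)"
      using p IV by (intro epowr_mono) auto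
    also have "\<dots> = ennreal ((4^DIM('a) * (2 * real n)) powr (1/p))" by (simp add: epowr_ennreal)
    finally show ?thesis .
  qed
  finally have "ennreal ((real n powr (p/t) * (real n * (2^DIM('a) * (1 - 1/b) / b^2))) powr (1/p))
      \<le> ennreal (C * (2 * 16^DIM('a) * real n) powr \<alpha>) * ennreal ((4^DIM('a) * (2 * real n)) powr (1/p))"
    by (simp add: mult_mono)
  also have "\<dots> = ennreal (C * (2 * 16^DIM('a) * real n) powr \<alpha> * (4^DIM('a) * (2 * real n)) powr (1/p))"
    using C by (simp add: ennreal_mult')
  finally show ?thesis
    using C by (subst (asm) ennreal_le_iff) auto
qed



lemma powr_contra:
  assumes c: "0 < c" and a: "\<alpha> < a"
    and H: "\<And>n::nat. 1 \<le> n \<Longrightarrow> real n powr a * c \<le> K * real n powr \<alpha>"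
  shows False
proof (rule final_contra[of "a - \<alpha>" "K / c"])
  show "0 < a - \<alpha>" using a by simp
  fix n :: nat assume n: "1 \<le> n"
  have np: "0 < real n powr \<alpha>" using n by simp
  have "real n powr (a - \<alpha>) = real n powr a / real n powr \<alpha>" by (simp add: powr_diff)
  also have "\<dots> \<le> K / c"
    using H[OF n] np c by (simp add: divide_le_eq le_divide_eq mult.commute)
  finally show "real n powr (a - \<alpha>) \<le> K / c" .
qed

theorem lemma4p4:
  fixes p t q r \<eta> \<alpha> :: real
  assumes "0 < p" and "0 < t" and "1 < q" and "0 < r" and "r < 1" and "0 < \<eta>" and "\<eta> < 1"
    and "\<alpha> \<ge> 0"
    and "\<exists>C>0. \<forall>(w :: 'a::euclidean_space \<Rightarrow> real) S f.
           in_Aq q w \<longrightarrow> sparse \<eta> S \<longrightarrow> in_Lpw p w f \<longrightarrow>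
           Lpw_norm p w (sparse_op r t S f)
             \<le> ennreal (C * Aq_char q w powr \<alpha>) * Lpw_norm p w (\<lambda>x. ennreal \<bar>f x\<bar>)"
  shows "\<alpha> \<ge> max (1 / p) (1 / t)"
proof -
  note p = assms(1) and t = assms(2) and q = assms(3) and r = assms(4,5) and \<eta> = assms(6,7)
    and \<alpha> = assms(8)
  obtain C where C: "0 < C" and H: "\<forall>(w :: 'a::euclidean_space \<Rightarrow> real) S f.
           in_Aq q w \<longrightarrow> sparse \<eta> S \<longrightarrow> in_Lpw p w f \<longrightarrow>
           Lpw_norm p w (sparse_op r t S f)
             \<le> ennreal (C * Aq_char q w powr \<alpha>) * Lpw_norm p w (\<lambda>x. ennreal \<bar>f x\<bar>)"
    using assms(9) by blast
  define b where "b = 2 + 1/(1-\<eta>) + 1/(1-r)"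
  have i1: "0 < 1/(1-\<eta>)" "0 < 1/(1-r)" using \<eta> r by simp_all
  have b2: "2 \<le> b" unfolding b_def using i1 by linarith
  have "1/(1-\<eta>) \<le> b" unfolding b_def using i1 by linarith
  then have "inverse b \<le> inverse (1/(1-\<eta>))" using i1 by (intro le_imp_inverse_le) auto
  then have b\<eta>: "1/b \<le> 1 - \<eta>" by (simp add: inverse_eq_divide)
  have "1/(1-r) < b" unfolding b_def using i1 by linarith
  then have "inverse b < inverse (1/(1-r))" using i1 by (intro less_imp_inverse_less) auto
  then have br: "1/b < 1 - r" by (simp add: inverse_eq_divide)
  define c0 where "c0 = 2^DIM('a) * (1 - 1/b) / b^2"
  have c0: "0 < c0" using b2 by (simp add: c0_def)
  define A where "A = (2 * 16^DIM('a) :: real)"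
  have A0: "0 < A" by (simp add: A_def)
  have P: "1/p \<le> \<alpha>"
  proof (rule ccontr)
    assume "\<not> 1/p \<le> \<alpha>"
    then have a: "\<alpha> < 1/p" by simp
    define V where "V = (b^DIM('a) * 2^DIM('a) :: real)"
    show False
    proof (rule powr_contra[of "c0 powr (1/p)" \<alpha> "1/p" "C * A powr \<alpha> * V powr (1/p)"])
      show "0 < c0 powr (1/p)" using c0 by simp
      show "\<alpha> < 1/p" by (rule a)
      fix n :: nat assume n: "1 \<le> n"
      have "(real n * c0) powr (1/p) \<le> C * (A * real n) powr \<alpha> * V powr (1/p)"
        using partA[OF p t q r \<eta> \<alpha> C b2 br H n] by (simp add: c0_def A_def V_def)
      moreover have "(real n * c0) powr (1/p) = real n powr (1/p) * c0 powr (1/p)"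
        using c0 by (simp add: powr_mult)
      moreover have "(A * real n) powr \<alpha> = A powr \<alpha> * real n powr \<alpha>"
        using A0 by (simp add: powr_mult)
      ultimately show "real n powr (1/p) * c0 powr (1/p) \<le> C * A powr \<alpha> * V powr (1/p) * real n powr \<alpha>"
        by (simp add: algebra_simps)
    qed
  qed
  have T: "1/t \<le> \<alpha>"
  proof (rule ccontr)
    assume "\<not> 1/t \<le> \<alpha>"
    then have a: "\<alpha> < 1/t" by simp
    define V where "V = (4^DIM('a) * 2 :: real)"
    show False
    proof (rule powr_contra[of "c0 powr (1/p)" \<alpha> "1/t" "C * A powr \<alpha> * V powr (1/p)"])
      show "0 < c0 powr (1/p)" using c0 by simp
      show "\<alpha> < 1/t" by (rule a)
      fix n :: nat assume n: "1 \<le> n"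
      have n0: "0 < real n" using n by simp
      have "(real n powr (p/t) * (real n * c0)) powr (1/p) \<le> C * (A * real n) powr \<alpha> * (V * real n) powr (1/p)"
        using partB[OF p t q r \<eta> \<alpha> C b2 b\<eta> br H n] by (simp add: c0_def A_def V_def mult.assoc)
      moreover have "(real n powr (p/t) * (real n * c0)) powr (1/p)
          = real n powr (1/t) * real n powr (1/p) * c0 powr (1/p)"
        using c0 n0 p by (simp add: powr_mult powr_powr)
      moreover have "(A * real n) powr \<alpha> = A powr \<alpha> * real n powr \<alpha>"
        using A0 by (simp add: powr_mult)
      moreover have "(V * real n) powr (1/p) = V powr (1/p) * real n powr (1/p)"
        using n0 by (simp add: powr_mult V_def)
      ultimately have "real n powr (1/p) * (real n powr (1/t) * c0 powr (1/p))
          \<le> real n powr (1/p) * (C * A powr \<alpha> * V powr (1/p) * real n powr \<alpha>)"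
        by (simp add: algebra_simps)
      then show "real n powr (1/t) * c0 powr (1/p) \<le> C * A powr \<alpha> * V powr (1/p) * real n powr \<alpha>"
        using n0 by (simp add: mult_le_cancel_left_pos)
    qed
  qed
  show ?thesis using P T by simp
qed


end
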